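(* Consider the single-round multidimensional procurement auction described in the context. If every player reports its true type, i.e. $(c'_i,s'_i)=(c_i,s_i)$ for all $i$, then every player's utility is nonnegative: $u_i\ge 0$ for all $i$ (individual rationality, $p_i-c_i\ge 0$).
   Context: A distributor allocates tasks to $n$ players (mobile devices). Each player $i$ has a private type $(c_i,s_i)$, where $s_i>0$ is its actual service quotient (amount of data it processes per second) and $c_i>0$ is its actual cost of performing the task. Each player $i$ submits a bid $(c'_i,s'_i)$. Allocation: the distributor computes weights $w_i=s'_i/c'_i$ from the reported bids, orders players by decreasing weight (relabel so that player $1$ has the largest weight, etc.), and selects the largest number $k$ of top-ranked players $\{1,\dots,k\}$ for which the budget constraint $\sum_{i} p_i/s_i\le B$ holds for a given budget $B>0$ (there is a player ranked $k+1$). Write $c_{k+1},s_{k+1}$ for the reported cost and service quotient of the player ranked $k+1$. Payment: players ranked $i>k$ receive $p_i=0$; a selected player $i\le k$ receives $p_i=p^1_i+p^2_i$ with $p^1_i=s'_i\,c_{k+1}/s_{k+1}$ and $p^2_i=d(s_i,s'_i)(s_i-s'_i)$, where $s_i$ is the actual service quotient observed after task completion and $d(s_i,s'_i)=0$ if $s_i\ge s'_i$, $d(s_i,s'_i)=(s'_i-s_i)^2+c_{k+1}/s_{k+1}$ if $s_i<s'_i$. The utility of player $i$ is $u_i=p_i-c_i$ if selected and $0$ otherwise. *)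

theory Defs
  imports Complex_Main
begin

text \<open>Types: actual cost c, actual service quotient s.
Bids: cb (reported cost), sb (reported service quotient).
A ranking sigma maps rank r (0-based; rank r is the paper's rank r+1) to a player,
ordered by non-increasing reported weight sb/cb.\<close>

definition ranking :: "nat \<Rightarrow> (nat \<Rightarrow> real) \<Rightarrow> (nat \<Rightarrow> real) \<Rightarrow> (nat \<Rightarrow> nat) \<Rightarrow> bool" where
  "ranking n cb sb \<sigma> \<longleftrightarrow> bij_betw \<sigma> {..<n} {..<n} \<and>
     (\<forall>a b. a \<le> b \<and> b < n \<longrightarrow> sb (\<sigma> b) / cb (\<sigma> b) \<le> sb (\<sigma> a) / cb (\<sigma> a))"

text \<open>Penalty coefficient d(s_i, s'_i), with threshold t = c_{k+1}/s_{k+1} (reported).\<close>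
definition dpen :: "real \<Rightarrow> real \<Rightarrow> real \<Rightarrow> real" where
  "dpen t si si' = (if si \<ge> si' then 0 else (si' - si)^2 + t)"

text \<open>Payment to the player at (0-based) rank r when the first k ranks (0..<k) are selected;
the paper's player k+1 is the one at 0-based rank k.\<close>
definition payment :: "(nat \<Rightarrow> real) \<Rightarrow> (nat \<Rightarrow> real) \<Rightarrow> (nat \<Rightarrow> real) \<Rightarrow> (nat \<Rightarrow> nat) \<Rightarrow> nat \<Rightarrow> nat \<Rightarrow> real" where
  "payment s cb sb \<sigma> k r =
     (let t = cb (\<sigma> k) / sb (\<sigma> k); i = \<sigma> r in
      sb i * t + dpen t (s i) (sb i) * (s i - sb i))"

definition budget_ok :: "real \<Rightarrow> (nat \<Rightarrow> real) \<Rightarrow> (nat \<Rightarrow> real) \<Rightarrow> (nat \<Rightarrow> real) \<Rightarrow> (nat \<Rightarrow> nat) \<Rightarrow> nat \<Rightarrow> bool" where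
  "budget_ok B s cb sb \<sigma> k \<longleftrightarrow> (\<Sum>r<k. payment s cb sb \<sigma> k r / s (\<sigma> r)) \<le> B"

text \<open>Number of selected players: largest k such that the budget constraint holds and
there is a player ranked k+1 (i.e. k < n).\<close>
definition num_selected :: "nat \<Rightarrow> real \<Rightarrow> (nat \<Rightarrow> real) \<Rightarrow> (nat \<Rightarrow> real) \<Rightarrow> (nat \<Rightarrow> real) \<Rightarrow> (nat \<Rightarrow> nat) \<Rightarrow> nat" where
  "num_selected n B s cb sb \<sigma> = (GREATEST k. k < n \<and> budget_ok B s cb sb \<sigma> k)"

definition utility :: "nat \<Rightarrow> real \<Rightarrow> (nat \<Rightarrow> real) \<Rightarrow> (nat \<Rightarrow> real) \<Rightarrow> (nat \<Rightarrow> real) \<Rightarrow> (nat \<Rightarrow> real) \<Rightarrow> (nat \<Rightarrow> nat) \<Rightarrow> nat \<Rightarrow> real" where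
  "utility n B c s cb sb \<sigma> i =
     (let k = num_selected n B s cb sb \<sigma>; r = the_inv_into {..<n} \<sigma> i in
      if r < k then payment s cb sb \<sigma> k r - c i else 0)"

end

theory Submission
  imports Defs
begin

theorem lemma4:
  fixes n :: nat and B :: real and c s :: "nat \<Rightarrow> real" and \<sigma> :: "nat \<Rightarrow> nat"
  assumes "B > 0"
    and "\<forall>i<n. c i > 0 \<and> s i > 0"
    and "ranking n c s \<sigma>"
    and "i < n"
  shows "utility n B c s c s \<sigma> i \<ge> 0"
proof -
  define k where "k = num_selected n B s c s \<sigma>"
  define r where "r = the_inv_into {..<n} \<sigma> i"
  have bij: "bij_betw \<sigma> {..<n} {..<n}" and ord: "\<And>a b. a \<le> b \<Longrightarrow> b < n \<Longrightarrow> s (\<sigma> b) / c (\<sigma> b) \<le> s (\<sigma> a) / c (\<sigma> a)"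
    using assms(3) unfolding ranking_def by auto
  have b0: "budget_ok B s c s \<sigma> 0" using assms(1) unfolding budget_ok_def by simp
  have kk: "k < n \<and> budget_ok B s c s \<sigma> k"
    unfolding k_def num_selected_def
    by (rule GreatestI_nat[where k=0 and b=n]) (use b0 assms(4) in auto)
  have rn: "r < n" and sr: "\<sigma> r = i"
    using bij assms(4) unfolding r_def
    by (auto simp: bij_betw_def the_inv_into_f_f f_the_inv_into_f intro!: the_inv_into_into)
  show ?thesis
  proof (cases "r < k")
    case True
    have sk: "\<sigma> k < n" using bij kk by (auto simp: bij_betw_def)
    have ps: "c (\<sigma> k) > 0" "s (\<sigma> k) > 0" "c i > 0" "s i > 0" using assms(2) sk assms(4) by auto
    have "s (\<sigma> k) / c (\<sigma> k) \<le> s i / c i" using ord[of r k] True kk sr by auto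
    hence "s (\<sigma> k) * c i \<le> s i * c (\<sigma> k)" using ps by (simp add: divide_simps mult.commute)
    hence "c i \<le> s i * (c (\<sigma> k) / s (\<sigma> k))" using ps by (simp add: divide_simps mult.commute)
    thus ?thesis using True unfolding utility_def payment_def dpen_def
      by (simp add: Let_def k_def[symmetric] r_def[symmetric] sr)
  next
    case False
    thus ?thesis unfolding utility_def by (simp add: Let_def k_def[symmetric] r_def[symmetric])
  qed
qed

end
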